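(* Let $T^2=\mathbb R^2/\mathbb Z^2$ and let $f\colon T^2\to T^2$ be $f([x])=[Ax]$ with $A=\begin{pmatrix}2&1\\1&1\end{pmatrix}$. Let $K\subseteq T^2$ be the orbit of a periodic point of $f$. Then $K$ is dynamically isolated for $f$, and the restriction of $f$ to $T^2\setminus K$ is metric-independent expansive.
   Context: A set $K$ invariant under a homeomorphism $f$ is dynamically isolated if there exists an open set $U\supseteq K$ with $\bigcap_{n\in\mathbb Z}f^n(U)=K$. A homeomorphism of a metrizable space is metric-independent expansive if for every compatible metric $\rho$ there is $c>0$ such that for all $x\neq y$ there exists $n\in\mathbb Z$ with $\rho(f^n(x),f^n(y))>c$. *)

theory Defs
  imports "HOL-Analysis.Analysis"
begin

text \<open>The torus T^2 = R^2/Z^2, realised (homeomorphically, via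
  [(x,y)] \<mapsto> (exp(2 pi i x), exp(2 pi i y))) as S^1 \<times> S^1 in C \<times> C.\<close>
definition torus :: "(complex \<times> complex) set" where
  "torus = {(z, w). cmod z = 1 \<and> cmod w = 1}"

definition torus_top :: "(complex \<times> complex) topology" where
  "torus_top = subtopology euclidean torus"

text \<open>The cat map [x] \<mapsto> [A x], A = ((2,1),(1,1)):
  (x,y) \<mapsto> (2x+y, x+y) becomes (z,w) \<mapsto> (z^2 w, z w).\<close>
definition cat_map :: "complex \<times> complex \<Rightarrow> complex \<times> complex" where
  "cat_map p = (fst p ^ 2 * snd p, fst p * snd p)"

definition zpow :: "'a set \<Rightarrow> ('a \<Rightarrow> 'a) \<Rightarrow> int \<Rightarrow> 'a \<Rightarrow> 'a" where
  "zpow S f n = (if n \<ge> 0 then f ^^ nat n else inv_into S f ^^ nat (- n))"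

definition dyn_isolated :: "'a topology \<Rightarrow> ('a \<Rightarrow> 'a) \<Rightarrow> 'a set \<Rightarrow> bool" where
  "dyn_isolated X f K \<longleftrightarrow>
     (\<exists>U. openin X U \<and> K \<subseteq> U \<and> (\<Inter>n::int. zpow (topspace X) f n ` U) = K)"

definition compatible_metric :: "'a topology \<Rightarrow> ('a \<Rightarrow> 'a \<Rightarrow> real) \<Rightarrow> bool" where
  "compatible_metric X d \<longleftrightarrow>
     Metric_space (topspace X) d \<and> Metric_space.mtopology (topspace X) d = X"

definition mi_expansive :: "'a topology \<Rightarrow> ('a \<Rightarrow> 'a) \<Rightarrow> bool" where
  "mi_expansive X f \<longleftrightarrow>
     (\<forall>d. compatible_metric X d \<longrightarrow>
        (\<exists>c>0. \<forall>x\<in>topspace X. \<forall>y\<in>topspace X. x \<noteq> y \<longrightarrow>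
           (\<exists>n::int. d (zpow (topspace X) f n x) (zpow (topspace X) f n y) > c)))"

end

theory Submission
  imports Defs
begin


definition cinv :: "complex \<times> complex \<Rightarrow> complex \<times> complex" where
  "cinv p = (fst p * cnj (snd p), cnj (fst p) * snd p ^ 2)"

definition pmul :: "complex \<times> complex \<Rightarrow> complex \<times> complex \<Rightarrow> complex \<times> complex" where
  "pmul p q = (fst p * fst q, snd p * snd q)"

definition pinv :: "complex \<times> complex \<Rightarrow> complex \<times> complex" where
  "pinv p = (cnj (fst p), cnj (snd p))"

definition Z :: "int \<Rightarrow> complex \<times> complex \<Rightarrow> complex \<times> complex" where
  "Z n = (if n \<ge> 0 then cat_map ^^ nat n else cinv ^^ nat (- n))"

lemma torus_iff: "p \<in> torus \<longleftrightarrow> cmod (fst p) = 1 \<and> cmod (snd p) = 1"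
  by (cases p) (simp add: torus_def)

lemma unit_cnj: "cmod z = 1 \<Longrightarrow> z * cnj z = 1"
  by (metis complex_norm_square of_real_1 power_one)

lemma cat_torus: "p \<in> torus \<Longrightarrow> cat_map p \<in> torus"
  by (simp add: torus_iff cat_map_def norm_mult norm_power)

lemma cinv_torus: "p \<in> torus \<Longrightarrow> cinv p \<in> torus"
  by (simp add: torus_iff cinv_def norm_mult norm_power)

lemma cat_cinv: "p \<in> torus \<Longrightarrow> cat_map (cinv p) = p"
proof -
  assume "p \<in> torus"
  then have a: "fst p * cnj (fst p) = 1" and b: "snd p * cnj (snd p) = 1"
    by (auto simp: torus_iff unit_cnj)
  have 1: "(fst p * cnj (snd p))\<^sup>2 * (cnj (fst p) * (snd p)\<^sup>2) = fst p * (fst p * cnj (fst p)) * (snd p * cnj (snd p))^2"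
    by (simp add: power2_eq_square algebra_simps)
  have 2: "fst p * cnj (snd p) * (cnj (fst p) * (snd p)\<^sup>2) = snd p * (fst p * cnj (fst p)) * (snd p * cnj (snd p))"
    by (simp add: power2_eq_square algebra_simps)
  show ?thesis unfolding cat_map_def cinv_def using 1 2 a b by (simp add: prod_eq_iff)
qed

lemma cinv_cat: "p \<in> torus \<Longrightarrow> cinv (cat_map p) = p"
proof -
  assume "p \<in> torus"
  then have a: "fst p * cnj (fst p) = 1" and b: "snd p * cnj (snd p) = 1"
    by (auto simp: torus_iff unit_cnj)
  have 1: "(fst p)\<^sup>2 * snd p * cnj (fst p * snd p) = fst p * (fst p * cnj (fst p)) * (snd p * cnj (snd p))"
    by (simp add: power2_eq_square algebra_simps)
  have 2: "cnj ((fst p)\<^sup>2 * snd p) * (fst p * snd p)\<^sup>2 = snd p * (fst p * cnj (fst p))^2 * (snd p * cnj (snd p))"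
    by (simp add: power2_eq_square algebra_simps)
  show ?thesis unfolding cat_map_def cinv_def using 1 2 a b by (simp add: prod_eq_iff)
qed

lemma cat_mul: "cat_map (pmul p q) = pmul (cat_map p) (cat_map q)"
  by (simp add: cat_map_def pmul_def power2_eq_square algebra_simps)

lemma cinv_mul: "cinv (pmul p q) = pmul (cinv p) (cinv q)"
  by (simp add: cinv_def pmul_def power2_eq_square algebra_simps)

lemma catn_torus: "p \<in> torus \<Longrightarrow> (cat_map ^^ n) p \<in> torus"
  by (induction n) (auto simp: cat_torus)

lemma cinvn_torus: "p \<in> torus \<Longrightarrow> (cinv ^^ n) p \<in> torus"
  by (induction n) (auto simp: cinv_torus)

lemma Z_torus: "p \<in> torus \<Longrightarrow> Z n p \<in> torus"
  by (simp add: Z_def catn_torus cinvn_torus)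

lemma Z_0 [simp]: "Z 0 p = p"
  by (simp add: Z_def)

lemma Z_up: "p \<in> torus \<Longrightarrow> Z (n + 1) p = cat_map (Z n p)"
proof (cases "n \<ge> 0")
  case True
  then have "nat (n+1) = Suc (nat n)" by simp
  then show ?thesis using True by (simp add: Z_def)
next
  case False
  assume p: "p \<in> torus"
  define m where "m = nat (-n - 1)"
  have n1: "nat (-n) = Suc m" using False m_def by simp
  show ?thesis
  proof (cases "n = -1")
    case True
    then show ?thesis using p by (simp add: Z_def cat_cinv)
  next
    case False2: False
    have "nat (-(n+1)) = m" using m_def by simp
    then show ?thesis using False False2 n1 p by (simp add: Z_def cat_cinv cinvn_torus)
  qed
qed

lemma Z_down: "p \<in> torus \<Longrightarrow> Z (n - 1) p = cinv (Z n p)"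
proof -
  assume p: "p \<in> torus"
  have "Z n p = cat_map (Z (n - 1) p)" using Z_up[OF p, of "n-1"] by simp
  then show ?thesis using cinv_cat[OF Z_torus[OF p]] by simp
qed

lemma Z_add: "p \<in> torus \<Longrightarrow> Z m (Z n p) = Z (m + n) p"
proof (induction m rule: int_induct[where k=0])
  case base
  then show ?case by simp
next
  case (step1 i)
  then show ?case using Z_up Z_torus by (metis add.commute add.left_commute)
next
  case (step2 i)
  then show ?case using Z_down Z_torus by (metis add_diff_eq diff_add_eq)
qed

lemma Z_mul: "Z n (pmul p q) = pmul (Z n p) (Z n q)"
proof -
  have "(cat_map ^^ k) (pmul p q) = pmul ((cat_map ^^ k) p) ((cat_map ^^ k) q)" for k
    by (induction k) (auto simp: cat_mul)
  moreover have "(cinv ^^ k) (pmul p q) = pmul ((cinv ^^ k) p) ((cinv ^^ k) q)" for k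
    by (induction k) (auto simp: cinv_mul)
  ultimately show ?thesis by (simp add: Z_def)
qed




lemma geom_bounded_zero:
  fixes l x B :: real
  assumes "l > 1" "\<And>k::nat. \<bar>l ^ k * x\<bar> \<le> B"
  shows "x = 0"
proof (rule ccontr)
  assume "x \<noteq> 0"
  then have ax: "\<bar>x\<bar> > 0" by simp
  obtain k where "B / \<bar>x\<bar> < l ^ k" using real_arch_pow[OF assms(1)] by blast
  then have "B < l ^ k * \<bar>x\<bar>" using ax by (simp add: field_simps)
  also have "\<dots> = \<bar>l ^ k * x\<bar>" using assms(1) by (simp add: abs_mult)
  finally show False using assms(2)[of k] by simp
qed

lemma hyp_lin:
  fixes a b :: "int \<Rightarrow> real"
  assumes bnd: "\<And>n. \<bar>a n\<bar> \<le> 1 \<and> \<bar>b n\<bar> \<le> 1"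
    and rec: "\<And>n. a (n + 1) = 2 * a n + b n \<and> b (n + 1) = a n + b n"
  shows "a 0 = 0 \<and> b 0 = 0"
proof -
  have lrec: "a (n+1) + c * b (n+1) = (2 + c) * (a n + c * b n)" if "c^2 + c - 1 = 0" for c n
  proof -
    have cc: "c*c = 1 - c" using that by (simp add: power2_eq_square)
    have "(2 + c) * (a n + c * b n) = (2+c) * a n + (2*c + c*c) * b n" by (simp add: algebra_simps)
    also have "\<dots> = (2+c) * a n + (1 + c) * b n" using cc by simp
    also have "\<dots> = a (n+1) + c * b (n+1)" using rec[of n] by (simp add: algebra_simps)
    finally show ?thesis by simp
  qed
  have lb: "\<bar>a n + c * b n\<bar> \<le> 1 + \<bar>c\<bar>" for c n
  proof -
    have "\<bar>c * b n\<bar> \<le> \<bar>c\<bar>" using bnd[of n] by (simp add: abs_mult mult_left_le)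
    then show ?thesis using bnd[of n] by linarith
  qed
  define r :: real where "r = sqrt 5"
  define c1 :: real where "c1 = (r - 1) / 2"
  define c2 :: real where "c2 = (- r - 1) / 2"
  have s5: "r ^ 2 = (5::real)" unfolding r_def by simp
  have c1e: "c1^2 + c1 - 1 = 0" unfolding c1_def using s5 by (simp add: power2_eq_square field_simps)
  have c2e: "c2^2 + c2 - 1 = 0" unfolding c2_def using s5 by (simp add: power2_eq_square field_simps)
  have s5gt: "r > (2::real)" unfolding r_def using real_less_rsqrt[of 2 5] by simp
  have s5lt: "r < (3::real)" unfolding r_def using real_less_lsqrt[of 3 5] by simp
  have fwd: "a (int k) + c1 * b (int k) = (2 + c1) ^ k * (a 0 + c1 * b 0)" for k
  proof (induction k)
    case 0 then show ?case by simp
  next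
    case (Suc k)
    have "a (int (Suc k)) + c1 * b (int (Suc k)) = (2 + c1) * (a (int k) + c1 * b (int k))"
      using lrec[OF c1e, of "int k"] by (simp add: add.commute)
    then show ?case using Suc by simp
  qed
  have z1: "a 0 + c1 * b 0 = 0"
  proof (rule geom_bounded_zero[where l = "2 + c1" and B = "1 + \<bar>c1\<bar>"])
    show "2 + c1 > 1" unfolding c1_def using s5gt by (simp add: field_simps)
    show "\<bar>(2 + c1) ^ k * (a 0 + c1 * b 0)\<bar> \<le> 1 + \<bar>c1\<bar>" for k
      using fwd[of k] lb[where c=c1 and n="int k"] by simp
  qed
  define m where "m = 2 + c2"
  have mpos: "m > 0" "m < 1" unfolding m_def c2_def using s5gt s5lt by (simp_all add: field_simps)
  have bwd: "a 0 + c2 * b 0 = m ^ k * (a (- int k) + c2 * b (- int k))" for k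
  proof (induction k)
    case 0 then show ?case by simp
  next
    case (Suc k)
    have "a (- int k) + c2 * b (- int k) = m * (a (- int (Suc k)) + c2 * b (- int (Suc k)))"
      using lrec[OF c2e, of "- int (Suc k)"] unfolding m_def by (simp add: algebra_simps)
    then show ?case using Suc by simp
  qed
  have z2: "a 0 + c2 * b 0 = 0"
  proof (rule geom_bounded_zero[where l = "1 / m" and B = "1 + \<bar>c2\<bar>"])
    show "1 / m > 1" using mpos by simp
    show "\<bar>(1 / m) ^ k * (a 0 + c2 * b 0)\<bar> \<le> 1 + \<bar>c2\<bar>" for k
    proof -
      have "(1 / m) ^ k * (a 0 + c2 * b 0) = a (- int k) + c2 * b (- int k)"
        using bwd[of k] mpos by (simp add: power_one_over field_simps)
      then show ?thesis using lb[where c=c2 and n="- int k"] by simp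
    qed
  qed
  have "c1 \<noteq> c2" unfolding c1_def c2_def using s5gt by (simp add: field_simps)
  then have "b 0 = 0" using z1 z2
    by (metis add_left_cancel mult_cancel_right)
  then show ?thesis using z1 by simp
qed




lemma pmul_comm: "pmul p q = pmul q p"
  by (simp add: pmul_def mult.commute)

lemma dist_pmul: "u \<in> torus \<Longrightarrow> dist (pmul u p) (pmul u q) = dist p q"
proof -
  assume u: "u \<in> torus"
  have "dist (fst u * fst p) (fst u * fst q) = dist (fst p) (fst q)"
    using u by (simp add: dist_norm torus_iff flip: right_diff_distrib) (simp add: norm_mult)
  moreover have "dist (snd u * snd p) (snd u * snd q) = dist (snd p) (snd q)"
    using u by (simp add: dist_norm torus_iff flip: right_diff_distrib) (simp add: norm_mult)
  ultimately show ?thesis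
    by (cases p, cases q) (simp add: pmul_def dist_Pair_Pair)
qed

lemma dist_le_sum: "dist (x::complex\<times>complex) y \<le> dist (fst x) (fst y) + dist (snd x) (snd y)"
proof (cases x, cases y)
  fix a b aa ba assume "x = (a, b)" "y = (aa, ba)"
  then show ?thesis
    using sqrt_sum_squares_le_sum_abs[of "dist a aa" "dist b ba"] by (simp add: dist_Pair_Pair)
qed

lemma cmul_lip: "cmod a = 1 \<Longrightarrow> cmod b = 1 \<Longrightarrow> cmod c = 1 \<Longrightarrow> cmod d = 1 \<Longrightarrow>
   dist (a * b) (c * d) \<le> dist a c + dist b d"
proof -
  assume h: "cmod a = 1" "cmod b = 1" "cmod c = 1" "cmod d = 1"
  have "a * b - c * d = (a - c) * b + c * (b - d)" by (simp add: algebra_simps)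
  then have "cmod (a * b - c * d) \<le> cmod ((a - c) * b) + cmod (c * (b - d))"
    by (metis norm_triangle_ineq)
  also have "\<dots> = cmod (a - c) + cmod (b - d)" using h by (simp add: norm_mult)
  finally show ?thesis by (simp add: dist_norm)
qed

lemma cat_lip: "x \<in> torus \<Longrightarrow> y \<in> torus \<Longrightarrow> dist (cat_map x) (cat_map y) \<le> 5 * dist x y"
proof -
  assume x: "x \<in> torus" and y: "y \<in> torus"
  let ?a = "dist (fst x) (fst y)" and ?b = "dist (snd x) (snd y)"
  have ha: "?a \<le> dist x y" by (rule dist_fst_le)
  have hb: "?b \<le> dist x y" by (rule dist_snd_le)
  have n: "cmod (fst x) = 1" "cmod (snd x) = 1" "cmod (fst y) = 1" "cmod (snd y) = 1"
    using x y by (auto simp: torus_iff)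
  have sq: "dist ((fst x)^2) ((fst y)^2) \<le> 2 * ?a"
    using cmul_lip[of "fst x" "fst x" "fst y" "fst y"] n by (simp add: power2_eq_square)
  have "dist ((fst x)^2 * snd x) ((fst y)^2 * snd y) \<le> dist ((fst x)^2) ((fst y)^2) + ?b"
    using cmul_lip[of "(fst x)^2" "snd x" "(fst y)^2" "snd y"] n by (simp add: norm_power)
  then have 1: "dist ((fst x)^2 * snd x) ((fst y)^2 * snd y) \<le> 2 * ?a + ?b" using sq by linarith
  have 2: "dist (fst x * snd x) (fst y * snd y) \<le> ?a + ?b"
    using cmul_lip[of "fst x" "snd x" "fst y" "snd y"] n by simp
  have "dist (cat_map x) (cat_map y) \<le> (2 * ?a + ?b) + (?a + ?b)"
    using dist_le_sum[of "cat_map x" "cat_map y"] 1 2 by (simp add: cat_map_def)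
  then show ?thesis using ha hb by linarith
qed

lemma cinv_lip: "x \<in> torus \<Longrightarrow> y \<in> torus \<Longrightarrow> dist (cinv x) (cinv y) \<le> 5 * dist x y"
proof -
  assume x: "x \<in> torus" and y: "y \<in> torus"
  let ?a = "dist (fst x) (fst y)" and ?b = "dist (snd x) (snd y)"
  have ha: "?a \<le> dist x y" by (rule dist_fst_le)
  have hb: "?b \<le> dist x y" by (rule dist_snd_le)
  have n: "cmod (fst x) = 1" "cmod (snd x) = 1" "cmod (fst y) = 1" "cmod (snd y) = 1"
    using x y by (auto simp: torus_iff)
  have dc: "dist (cnj u) (cnj v) = dist u v" for u v
    by (simp add: dist_norm flip: complex_cnj_diff)
  have sq: "dist ((snd x)^2) ((snd y)^2) \<le> 2 * ?b"
    using cmul_lip[of "snd x" "snd x" "snd y" "snd y"] n by (simp add: power2_eq_square)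
  have "dist (cnj (fst x) * (snd x)^2) (cnj (fst y) * (snd y)^2) \<le> dist (cnj (fst x)) (cnj (fst y)) + dist ((snd x)^2) ((snd y)^2)"
    using cmul_lip[of "cnj (fst x)" "(snd x)^2" "cnj (fst y)" "(snd y)^2"] n by (simp add: norm_power)
  then have 1: "dist (cnj (fst x) * (snd x)^2) (cnj (fst y) * (snd y)^2) \<le> ?a + 2 * ?b" using sq dc by simp
  have 2: "dist (fst x * cnj (snd x)) (fst y * cnj (snd y)) \<le> ?a + ?b"
    using cmul_lip[of "fst x" "cnj (snd x)" "fst y" "cnj (snd y)"] n dc by simp
  have "dist (cinv x) (cinv y) \<le> (?a + ?b) + (?a + 2 * ?b)"
    using dist_le_sum[of "cinv x" "cinv y"] 1 2 by (simp add: cinv_def)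
  then show ?thesis using ha hb by linarith
qed

lemma exp_ii_eq:
  assumes "exp (\<i> * of_real s) = exp (\<i> * of_real t)" "\<bar>s - t\<bar> < 1"
  shows "s = t"
proof -
  have "exp (\<i> * of_real (s - t)) = 1"
    using assms(1) by (simp add: algebra_simps exp_diff)
  then obtain k :: int where k: "s - t = of_int (2 * k) * pi"
    by (auto simp: exp_eq_1)
  have "k = 0"
  proof (rule ccontr)
    assume "k \<noteq> 0"
    then have k1: "\<bar>real_of_int k\<bar> \<ge> 1" by linarith
    have "\<bar>s - t\<bar> = 2 * pi * \<bar>real_of_int k\<bar>" using k by (simp add: abs_mult)
    also have "\<dots> \<ge> 2 * pi * 1" using k1 by (intro mult_left_mono) auto
    finally show False using assms(2) pi_gt3 by simp
  qed
  then show ?thesis using k by simp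
qed

lemma unit_exp: "cmod z = 1 \<Longrightarrow> exp (\<i> * of_real (Im (Ln z))) = z"
proof -
  assume z: "cmod z = 1"
  then have "z \<noteq> 0" by auto
  then have "Ln z = \<i> * of_real (Im (Ln z))" using z by (simp add: complex_eq_iff)
  then show ?thesis using \<open>z \<noteq> 0\<close> by (metis exp_Ln)
qed

lemma cat_expansive0:
  "\<exists>\<delta>>0. \<forall>w\<in>torus. (\<forall>n. dist (Z n w) (1,1) \<le> \<delta>) \<longrightarrow> w = (1,1)"
proof -
  have "continuous (at 1) Ln" by (rule continuous_at_Ln) (auto simp: nonpos_Reals_def)
  then obtain d where d: "d > 0" "\<And>z. dist z 1 < d \<Longrightarrow> dist (Ln z) (Ln 1) < 1/10"
    unfolding continuous_at_eps_delta by (metis zero_less_divide_1_iff zero_less_numeral)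
  show ?thesis
  proof (intro exI[of _ "d/2"] conjI ballI impI)
    show "d/2 > 0" using d by simp
    fix w assume w: "w \<in> torus" and B: "\<forall>n. dist (Z n w) (1, 1) \<le> d / 2"
    define a where "a n = Im (Ln (fst (Z n w)))" for n
    define b where "b n = Im (Ln (snd (Z n w)))" for n
    have nz: "cmod (fst (Z n w)) = 1" "cmod (snd (Z n w)) = 1" for n
      using Z_torus[OF w] by (auto simp: torus_iff)
    have small: "\<bar>a n\<bar> < 1/10 \<and> \<bar>b n\<bar> < 1/10" for n
    proof -
      have Bn: "dist (Z n w) (1,1) \<le> d/2" using B by blast
      have "dist (fst (Z n w)) 1 < d"
        using dist_fst_le[of "Z n w" "(1,1)"] Bn d by simp
      then have "cmod (Ln (fst (Z n w))) < 1/10" using d(2) by (simp add: dist_norm)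
      then have 1: "\<bar>a n\<bar> < 1/10" unfolding a_def using abs_Im_le_cmod by (metis le_less_trans)
      have "dist (snd (Z n w)) 1 < d"
        using dist_snd_le[of "Z n w" "(1,1)"] Bn d by simp
      then have "cmod (Ln (snd (Z n w))) < 1/10" using d(2) by (simp add: dist_norm)
      then have 2: "\<bar>b n\<bar> < 1/10" unfolding b_def using abs_Im_le_cmod by (metis le_less_trans)
      show ?thesis using 1 2 by simp
    qed
    have ea: "exp (\<i> * of_real (a n)) = fst (Z n w)" for n unfolding a_def using nz unit_exp by blast
    have eb: "exp (\<i> * of_real (b n)) = snd (Z n w)" for n unfolding b_def using nz unit_exp by blast
    have rec: "a (n + 1) = 2 * a n + b n \<and> b (n + 1) = a n + b n" for n
    proof -
      have Zs: "Z (n+1) w = cat_map (Z n w)" using Z_up[OF w] .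
      have i1: "\<i> * of_real (2 * a n + b n) = \<i> * of_real (a n) + \<i> * of_real (a n) + \<i> * of_real (b n)"
        by (simp add: algebra_simps)
      have "exp (\<i> * of_real (2 * a n + b n)) = exp (\<i> * of_real (a n)) * exp (\<i> * of_real (a n)) * exp (\<i> * of_real (b n))"
        unfolding i1 by (simp only: exp_add)
      also have "\<dots> = fst (Z (n+1) w)" unfolding ea eb Zs by (simp add: cat_map_def power2_eq_square)
      finally have "exp (\<i> * of_real (a (n+1))) = exp (\<i> * of_real (2 * a n + b n))"
        using ea[of "n+1"] by simp
      moreover have "\<bar>a (n+1) - (2 * a n + b n)\<bar> < 1" using small[of "n+1"] small[of n] by linarith
      ultimately have r1: "a (n + 1) = 2 * a n + b n" by (rule exp_ii_eq)
      have i2: "\<i> * of_real (a n + b n) = \<i> * of_real (a n) + \<i> * of_real (b n)"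
        by (simp add: algebra_simps)
      have "exp (\<i> * of_real (a n + b n)) = exp (\<i> * of_real (a n)) * exp (\<i> * of_real (b n))"
        unfolding i2 by (simp only: exp_add)
      also have "\<dots> = snd (Z (n+1) w)" unfolding ea eb Zs by (simp add: cat_map_def)
      finally have "exp (\<i> * of_real (b (n+1))) = exp (\<i> * of_real (a n + b n))"
        using eb[of "n+1"] by simp
      moreover have "\<bar>b (n+1) - (a n + b n)\<bar> < 1" using small[of "n+1"] small[of n] by linarith
      ultimately have r2: "b (n + 1) = a n + b n" by (rule exp_ii_eq)
      show ?thesis using r1 r2 by simp
    qed
    have "a 0 = 0 \<and> b 0 = 0"
    proof (rule hyp_lin)
      show "\<bar>a n\<bar> \<le> 1 \<and> \<bar>b n\<bar> \<le> 1" for n using small[of n] by linarith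
      show "a (n + 1) = 2 * a n + b n \<and> b (n + 1) = a n + b n" for n by (rule rec)
    qed
    then show "w = (1,1)" using ea[of 0] eb[of 0] by (simp add: prod_eq_iff)
  qed
qed

lemma cat_expansive:
  "\<exists>\<delta>>0. \<forall>x\<in>torus. \<forall>y\<in>torus. (\<forall>n. dist (Z n x) (Z n y) \<le> \<delta>) \<longrightarrow> x = y"
proof -
  obtain \<delta> where d: "\<delta> > 0" "\<forall>w\<in>torus. (\<forall>n. dist (Z n w) (1,1) \<le> \<delta>) \<longrightarrow> w = (1,1)"
    using cat_expansive0 by blast
  show ?thesis
  proof (intro exI[of _ \<delta>] conjI ballI impI)
    show "\<delta> > 0" by fact
    fix x y assume x: "x \<in> torus" and y: "y \<in> torus" and B: "\<forall>n. dist (Z n x) (Z n y) \<le> \<delta>"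
    define w where "w = pmul x (pinv y)"
    have yc: "fst y * cnj (fst y) = 1" "snd y * cnj (snd y) = 1" using y by (auto simp: torus_iff unit_cnj)
    have xw: "x = pmul w y" unfolding w_def pmul_def pinv_def using yc
      by (simp add: prod_eq_iff mult.assoc mult.commute[of "cnj _"])
    have wt: "w \<in> torus" unfolding w_def pmul_def pinv_def using x y by (simp add: torus_iff norm_mult)
    have "dist (Z n w) (1,1) \<le> \<delta>" for n
    proof -
      have "dist (Z n x) (Z n y) = dist (pmul (Z n y) (Z n w)) (pmul (Z n y) (1,1))"
        by (simp add: xw Z_mul pmul_comm) (simp add: pmul_def)
      also have "\<dots> = dist (Z n w) (1,1)" using dist_pmul Z_torus[OF y] by blast
      finally show ?thesis using B by metis
    qed
    then have "w = (1,1)" using d wt by blast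
    then show "x = y" using xw by (simp add: pmul_def)
  qed
qed




lemma lebesgue:
  fixes S C :: "('a::metric_space) set"
  assumes ms: "Metric_space S d" and top: "Metric_space.mtopology S d = subtopology euclidean S"
    and "compact C" "C \<subseteq> S" "r > 0"
  shows "\<exists>\<eta>>0. \<forall>a\<in>C. \<forall>b\<in>S. d a b < \<eta> \<longrightarrow> dist a b < r"
proof -
  interpret Metric_space S d by (rule ms)
  have "\<forall>a\<in>C. \<exists>e>0. mball a e \<subseteq> S \<inter> ball a (r/2)"
  proof
    fix a assume a: "a \<in> C"
    have "openin (subtopology euclidean S) (S \<inter> ball a (r/2))"
      by (auto simp: openin_subtopology intro!: exI[of _ "ball a (r/2)"])
    then have "openin mtopology (S \<inter> ball a (r/2))" using top by simp
    moreover have "a \<in> S \<inter> ball a (r/2)" using a assms by auto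
    ultimately show "\<exists>e>0. mball a e \<subseteq> S \<inter> ball a (r/2)"
      unfolding openin_mtopology by blast
  qed
  then obtain e where e: "\<And>a. a \<in> C \<Longrightarrow> e a > 0 \<and> mball a (e a) \<subseteq> S \<inter> ball a (r/2)"
    by metis
  have "\<forall>a\<in>C. \<exists>V. open V \<and> mball a (e a / 2) = V \<inter> S"
  proof
    fix a assume "a \<in> C"
    have "openin (subtopology euclidean S) (mball a (e a / 2))" using top openin_mball by metis
    then show "\<exists>V. open V \<and> mball a (e a / 2) = V \<inter> S"
      by (auto simp: openin_subtopology)
  qed
  then obtain V where V: "\<And>a. a \<in> C \<Longrightarrow> open (V a) \<and> mball a (e a / 2) = V a \<inter> S"
    by metis
  have cov: "C \<subseteq> (\<Union>a\<in>C. V a)"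
  proof
    fix a assume a: "a \<in> C"
    then have "a \<in> mball a (e a / 2)" using e[OF a] assms by auto
    then show "a \<in> (\<Union>a\<in>C. V a)" using V[OF a] a by blast
  qed
  obtain C' where C': "C' \<subseteq> C" "finite C'" "C \<subseteq> (\<Union>a\<in>C'. V a)"
    using compactE_image[OF \<open>compact C\<close>, of C V, OF _ cov] V by blast
  define \<eta> where "\<eta> = Min (insert 1 ((\<lambda>a. e a / 2) ` C'))"
  have fin: "finite (insert 1 ((\<lambda>a. e a / 2) ` C'))" using C' by simp
  have etapos: "\<eta> > 0" unfolding \<eta>_def using fin C' e by (auto simp: Min_gr_iff)
  have etale: "\<eta> \<le> e a / 2" if "a \<in> C'" for a unfolding \<eta>_def using fin that by (intro Min_le) auto
  show ?thesis
  proof (intro exI[of _ \<eta>] conjI ballI impI)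
    show "\<eta> > 0" by fact
    fix a b assume a: "a \<in> C" and b: "b \<in> S" and dab: "d a b < \<eta>"
    obtain a' where a': "a' \<in> C'" "a \<in> V a'" using C' a by blast
    have a'C: "a' \<in> C" using a' C' by auto
    have aS: "a \<in> S" using a assms by auto
    have "a \<in> mball a' (e a' / 2)" using V[OF a'C] a' aS by blast
    then have 1: "d a' a < e a' / 2" and a'S: "a' \<in> S" by auto
    have "d a' b \<le> d a' a + d a b" using triangle a'S aS b by blast
    also have "\<dots> < e a'" using 1 dab etale[OF a'(1)] by linarith
    finally have "b \<in> mball a' (e a')" using a'S b by simp
    then have "dist a' b < r/2" using e[OF a'C] by auto
    moreover have "a \<in> mball a' (e a')" using 1 a'S aS e[OF a'C] by auto
    then have "dist a' a < r/2" using e[OF a'C] by auto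
    ultimately show "dist a b < r" using dist_triangle[of a b a'] by (simp add: dist_commute)
  qed
qed




lemma cat_inj: "inj_on cat_map torus"
  by (metis cinv_cat inj_on_inverseI)

lemma cinv_inj: "inj_on cinv torus"
  by (metis cat_cinv inj_on_inverseI)

lemma Z_inv: "p \<in> torus \<Longrightarrow> Z n (Z (-n) p) = p"
  using Z_add[of p n "-n"] by simp

lemma zpow_Z:
  assumes St: "S \<subseteq> torus" and Sc: "\<And>x. x \<in> S \<Longrightarrow> cat_map x \<in> S"
    and Si: "\<And>x. x \<in> S \<Longrightarrow> cinv x \<in> S" and x: "x \<in> S"
  shows "zpow S cat_map n x = Z n x"
proof -
  have inv: "inv_into S cat_map y = cinv y" if "y \<in> S" for y
    using inv_into_f_eq[OF inj_on_subset[OF cat_inj St] Si[OF that]] cat_cinv that St by blast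
  have "((inv_into S cat_map) ^^ m) x = (cinv ^^ m) x \<and> (cinv ^^ m) x \<in> S" for m
    by (induction m) (auto simp: x inv Si)
  then show ?thesis by (simp add: zpow_def Z_def)
qed

lemma finite_sep:
  fixes K :: "('a::metric_space) set"
  assumes "finite K"
  shows "\<exists>s>0. \<forall>k\<in>K. \<forall>k'\<in>K. k \<noteq> k' \<longrightarrow> s \<le> dist k k'"
proof -
  define D where "D = (\<lambda>(k, k'). dist k k') ` {(k, k'). k \<in> K \<and> k' \<in> K \<and> k \<noteq> k'}"
  have "finite {(k, k'). k \<in> K \<and> k' \<in> K \<and> k \<noteq> k'}"
    by (rule finite_subset[of _ "K \<times> K"]) (use assms in auto)
  then have fin: "finite (insert 1 D)" unfolding D_def by simp
  define s where "s = Min (insert 1 D)"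
  have "s > 0" unfolding s_def using fin by (auto simp: Min_gr_iff D_def)
  moreover have "s \<le> dist k k'" if "k \<in> K" "k' \<in> K" "k \<noteq> k'" for k k'
    unfolding s_def using fin that by (intro Min_le) (auto simp: D_def)
  ultimately show ?thesis by blast
qed

lemma isolation:
  assumes Kt: "K \<subseteq> torus" and Kc: "\<And>k. k \<in> K \<Longrightarrow> cat_map k \<in> K"
    and sep: "\<And>k k'. k \<in> K \<Longrightarrow> k' \<in> K \<Longrightarrow> k \<noteq> k' \<Longrightarrow> s \<le> dist k k'"
    and es: "6 * \<epsilon> < s" and ed: "\<epsilon> \<le> \<delta>"
    and exp: "\<forall>x\<in>torus. \<forall>y\<in>torus. (\<forall>n. dist (Z n x) (Z n y) \<le> \<delta>) \<longrightarrow> x = y"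
    and x: "x \<in> torus" and orb: "\<And>n. \<exists>k\<in>K. dist (Z n x) k < \<epsilon>"
  shows "x \<in> K"
proof -
  obtain kk where kk: "\<And>n. kk n \<in> K \<and> dist (Z n x) (kk n) < \<epsilon>" using orb by metis
  have st: "kk (n + 1) = cat_map (kk n)" for n
  proof (rule ccontr)
    assume ne: "kk (n + 1) \<noteq> cat_map (kk n)"
    have "dist (cat_map (kk n)) (Z (n+1) x) \<le> 5 * dist (kk n) (Z n x)"
      using cat_lip[of "kk n" "Z n x"] Z_up[OF x] kk[of n] Kt Z_torus[OF x] by auto
    then have "dist (cat_map (kk n)) (kk (n+1)) < 6 * \<epsilon>"
      using dist_triangle[of "cat_map (kk n)" "kk (n+1)" "Z (n+1) x"] kk[of n] kk[of "n+1"]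
      by (simp add: dist_commute)
    moreover have "s \<le> dist (cat_map (kk n)) (kk (n+1))"
      using sep[OF Kc[OF conjunct1[OF kk[of n]]] conjunct1[OF kk[of "n+1"]]] ne by simp
    ultimately show False using es by simp
  qed
  have k0: "kk 0 \<in> torus" using kk[of 0] Kt by blast
  have kkZ: "kk n = Z n (kk 0)" for n
  proof (induction n rule: int_induct[where k=0])
    case base then show ?case by simp
  next
    case (step1 i) then show ?case using st[of i] Z_up[OF k0, of i] by simp
  next
    case (step2 i)
    have "kk i = cat_map (kk (i - 1))" using st[of "i-1"] by simp
    moreover have "kk (i - 1) \<in> torus" using kk[of "i-1"] Kt by blast
    ultimately have "kk (i - 1) = cinv (kk i)" using cinv_cat by simp
    then show ?case using step2 Z_down[OF k0, of i] by simp
  qed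
  have "dist (Z n x) (Z n (kk 0)) \<le> \<delta>" for n using kk[of n] ed kkZ[of n, symmetric] by (metis less_imp_le order_trans)
  then have "x = kk 0" using exp x kk Kt by blast
  then show ?thesis using kk by simp
qed




lemma K_props:
  assumes p: "p \<in> torus" and per: "\<exists>n>0. (cat_map ^^ n) p = p"
    and K: "K = {(cat_map ^^ k) p | k. True}"
  shows "K \<subseteq> torus" "finite K" "\<And>k. k \<in> K \<Longrightarrow> cat_map k \<in> K" "\<And>k. k \<in> K \<Longrightarrow> cinv k \<in> K"
proof -
  obtain N where N: "N > 0" "(cat_map ^^ N) p = p" using per by blast
  show "K \<subseteq> torus" using K catn_torus[OF p] by auto
  have "K \<subseteq> (\<lambda>k. (cat_map ^^ k) p) ` {..<N}"
  proof
    fix x assume "x \<in> K"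
    then obtain k where "x = (cat_map ^^ k) p" using K by auto
    then have "x = (cat_map ^^ (k mod N)) p" using funpow_mod_eq[where f=cat_map and n=N and x=p, OF N(2), of k] by simp
    moreover have "k mod N < N" using N by simp
    ultimately show "x \<in> (\<lambda>k. (cat_map ^^ k) p) ` {..<N}" by blast
  qed
  then show "finite K" by (rule finite_subset) simp
  show "cat_map k \<in> K" if kK: "k \<in> K" for k
  proof -
    obtain j where "k = (cat_map ^^ j) p" using kK unfolding K by blast
    then have "cat_map k = (cat_map ^^ Suc j) p" by simp
    then show ?thesis using K by blast
  qed
  show "cinv k \<in> K" if kK: "k \<in> K" for k
  proof -
    obtain j where j: "k = (cat_map ^^ j) p" using kK unfolding K by blast
    show ?thesis
    proof (cases j)
      case 0
      obtain i where i: "N = Suc i" using N by (cases N) auto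
      have "k = cat_map ((cat_map ^^ i) p)" using j 0 N(2) i by simp
      then have "cinv k = (cat_map ^^ i) p" using cinv_cat catn_torus[OF p] by simp
      then show ?thesis using K by blast
    next
      case (Suc i)
      have "k = cat_map ((cat_map ^^ i) p)" using j Suc by simp
      then have "cinv k = (cat_map ^^ i) p" using cinv_cat catn_torus[OF p] by simp
      then show ?thesis using K by blast
    qed
  qed
qed

lemma KZ:
  assumes Kc: "\<And>k. k \<in> K \<Longrightarrow> cat_map k \<in> K" and Ki: "\<And>k. k \<in> K \<Longrightarrow> cinv k \<in> K"
    and k: "k \<in> K"
  shows "Z n k \<in> K"
proof -
  have "(cat_map ^^ m) k \<in> K" for m by (induction m) (auto simp: k Kc)
  moreover have "(cinv ^^ m) k \<in> K" for m by (induction m) (auto simp: k Ki)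
  ultimately show ?thesis by (simp add: Z_def)
qed

lemma bad_step:
  fixes F :: "complex \<times> complex \<Rightarrow> complex \<times> complex"
  assumes FK: "\<And>k. k \<in> K \<Longrightarrow> F k \<in> K" and Finj: "inj_on F torus"
    and Flip: "\<And>a b. a \<in> torus \<Longrightarrow> b \<in> torus \<Longrightarrow> dist (F a) (F b) \<le> 5 * dist a b"
    and Kt: "K \<subseteq> torus"
    and sep: "\<And>k k'. k \<in> K \<Longrightarrow> k' \<in> K \<Longrightarrow> k \<noteq> k' \<Longrightarrow> s \<le> dist k k'"
    and u: "u \<in> torus" and v: "v \<in> torus"
    and H: "(\<forall>k\<in>K. \<epsilon> \<le> dist (F u) k) \<or> (\<forall>k\<in>K. \<epsilon> \<le> dist (F v) k) \<Longrightarrow> dist (F u) (F v) < r"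
    and c1: "r + 10 * \<epsilon> < s" and c2: "12 * \<epsilon> < s"
    and k: "k \<in> K" and k': "k' \<in> K" and kk: "k \<noteq> k'" and uk: "dist u k < \<epsilon>" and vk: "dist v k' < \<epsilon>"
  shows "\<exists>k1\<in>K. \<exists>k1'\<in>K. k1 \<noteq> k1' \<and> dist (F u) k1 < \<epsilon> \<and> dist (F v) k1' < \<epsilon>"
proof -
  have kt: "k \<in> torus" "k' \<in> torus" using k k' Kt by auto
  have 1: "dist (F u) (F k) < 5 * \<epsilon>" using Flip[OF u kt(1)] uk by linarith
  have 2: "dist (F v) (F k') < 5 * \<epsilon>" using Flip[OF v kt(2)] vk by linarith
  have "F k \<noteq> F k'" using Finj kk kt by (meson inj_on_eq_iff)
  then have 3: "s \<le> dist (F k) (F k')" using sep FK k k' by blast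
  have tri: "dist (F k) (F k') \<le> dist (F u) (F k) + dist (F u) (F v) + dist (F v) (F k')"
    using dist_triangle[of "F k" "F k'" "F u"] dist_triangle[of "F u" "F k'" "F v"]
    by (simp add: dist_commute)
  show ?thesis
  proof (cases "(\<forall>k\<in>K. \<epsilon> \<le> dist (F u) k) \<or> (\<forall>k\<in>K. \<epsilon> \<le> dist (F v) k)")
    case True
    then have "dist (F u) (F v) < r" by (rule H)
    then show ?thesis using 1 2 3 tri c1 by linarith
  next
    case False
    then obtain k1 k1' where a: "k1 \<in> K" "dist (F u) k1 < \<epsilon>" and b: "k1' \<in> K" "dist (F v) k1' < \<epsilon>"
      by (auto simp: not_le)
    have "k1 \<noteq> k1'"
    proof
      assume "k1 = k1'"
      then have "dist (F u) (F v) < 2 * \<epsilon>"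
        using dist_triangle[of "F u" "F v" k1] a b by (simp add: dist_commute)
      then show False using 1 2 3 tri c2 by linarith
    qed
    then show ?thesis using a b by blast
  qed
qed




theorem mainTheorem15:
  fixes p :: "complex \<times> complex" and K :: "(complex \<times> complex) set"
  assumes "p \<in> torus"
    and "\<exists>n>0. (cat_map ^^ n) p = p"
    and "K = {(cat_map ^^ k) p | k. True}"
  shows "dyn_isolated torus_top cat_map K
         \<and> mi_expansive (subtopology torus_top (torus - K)) cat_map"
proof -
  note Kp = K_props[OF assms]
  have Kt: "K \<subseteq> torus" and Kfin: "finite K" and Kc: "\<And>k. k \<in> K \<Longrightarrow> cat_map k \<in> K"
    and Ki: "\<And>k. k \<in> K \<Longrightarrow> cinv k \<in> K" using Kp by auto
  obtain \<delta> where d: "\<delta> > 0" and exp: "\<forall>x\<in>torus. \<forall>y\<in>torus. (\<forall>n. dist (Z n x) (Z n y) \<le> \<delta>) \<longrightarrow> x = y"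
    using cat_expansive by blast
  obtain s where s: "s > 0" and sep: "\<And>k k'. k \<in> K \<Longrightarrow> k' \<in> K \<Longrightarrow> k \<noteq> k' \<Longrightarrow> s \<le> dist k k'"
    using finite_sep[OF Kfin] by blast
  define \<epsilon> where "\<epsilon> = min (\<delta>/2) (s/24)"
  define r where "r = min \<delta> (s/4)"
  have ep: "\<epsilon> > 0" "6 * \<epsilon> < s" "\<epsilon> \<le> \<delta>" "2 * \<epsilon> \<le> \<delta>" "12 * \<epsilon> < s" "r + 10 * \<epsilon> < s" "r > 0" "r \<le> \<delta>"
    unfolding \<epsilon>_def r_def using d s by (auto simp: min_def field_simps)
  have isol: "x \<in> K" if "x \<in> torus" "\<And>n. \<exists>k\<in>K. dist (Z n x) k < \<epsilon>" for x
    using isolation[OF Kt Kc sep ep(2) ep(3) exp that] by blast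
  have ZK: "Z n k \<in> K" if "k \<in> K" for n k using KZ[OF Kc Ki that] .
  have ZS: "Z n x \<in> torus - K" if "x \<in> torus - K" for n x
  proof -
    have xt: "x \<in> torus" using that by simp
    have "Z n x \<notin> K"
    proof
      assume "Z n x \<in> K"
      then have "Z (-n) (Z n x) \<in> K" by (rule ZK)
      then show False using Z_add[OF xt, of "-n" n] that by simp
    qed
    then show ?thesis using Z_torus[OF xt] by simp
  qed
  have part1: "dyn_isolated torus_top cat_map K"
  proof -
    define U where "U = torus \<inter> (\<Union>k\<in>K. ball k \<epsilon>)"
    have topt: "topspace torus_top = torus" by (simp add: torus_top_def)
    have zt: "zpow torus cat_map n x = Z n x" if "x \<in> torus" for n x
      by (rule zpow_Z) (auto simp: that cat_torus cinv_torus)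
    have oU: "openin torus_top U" unfolding torus_top_def U_def
      by (auto simp: openin_subtopology intro!: exI[of _ "\<Union>k\<in>K. ball k \<epsilon>"])
    have KU: "K \<subseteq> U" unfolding U_def using Kt ep(1) by auto
    have "(\<Inter>n::int. zpow torus cat_map n ` U) = K"
    proof
      show "K \<subseteq> (\<Inter>n::int. zpow torus cat_map n ` U)"
      proof
        fix k assume k: "k \<in> K"
        have "k \<in> zpow torus cat_map n ` U" for n
        proof
          have kt: "k \<in> torus" using k Kt by auto
          have "Z (-n) k \<in> U" using ZK[OF k] KU by blast
          moreover have "k = zpow torus cat_map n (Z (-n) k)"
            using zt[OF Z_torus[OF kt]] Z_inv[OF kt] by simp
          ultimately show "k = zpow torus cat_map n (Z (-n) k)" "Z (-n) k \<in> U" by auto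
        qed
        then show "k \<in> (\<Inter>n::int. zpow torus cat_map n ` U)" by blast
      qed
    next
      show "(\<Inter>n::int. zpow torus cat_map n ` U) \<subseteq> K"
      proof
        fix x assume x: "x \<in> (\<Inter>n::int. zpow torus cat_map n ` U)"
        have "Z n x \<in> U" for n
        proof -
          obtain u where u: "u \<in> U" "x = zpow torus cat_map (-n) u" using x by blast
          have ut: "u \<in> torus" using u U_def by auto
          have "x = Z (-n) u" using u zt[OF ut] by simp
          then have "Z n x = u" using Z_add[OF ut, of n "-n"] by simp
          then show ?thesis using u by simp
        qed
        then have "\<exists>k\<in>K. dist (Z n x) k < \<epsilon>" for n unfolding U_def by (force simp: dist_commute)
        moreover have "x \<in> torus" using \<open>Z 0 x \<in> U\<close> U_def by simp
        ultimately show "x \<in> K" using isol by blast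
      qed
    qed
    then show ?thesis unfolding dyn_isolated_def topt using oU KU by blast
  qed
  define S where "S = torus - K"
  have X: "subtopology torus_top (torus - K) = subtopology euclidean S"
  proof -
    have "torus \<inter> (torus - K) = S" unfolding S_def by auto
    then show ?thesis by (simp add: torus_top_def subtopology_subtopology)
  qed
  have topX: "topspace (subtopology euclidean S) = S" by simp
  have zS: "zpow S cat_map n x = Z n x" if "x \<in> S" for n x
  proof (rule zpow_Z)
    show "S \<subseteq> torus" unfolding S_def by auto
    show "cat_map x \<in> S" if "x \<in> S" for x
      using that ZS[of x 1] Z_up[of x 0] unfolding S_def by simp
    show "cinv x \<in> S" if "x \<in> S" for x
      using that ZS[of x "-1"] Z_down[of x 0] unfolding S_def by simp
  qed (rule that)
  have part2: "mi_expansive (subtopology euclidean S) cat_map"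
    unfolding mi_expansive_def topX
  proof (intro allI impI)
    fix dd assume "compatible_metric (subtopology euclidean S) dd"
    then have ms: "Metric_space S dd" and mt: "Metric_space.mtopology S dd = subtopology euclidean S"
      unfolding compatible_metric_def by auto
    define C where "C = torus - (\<Union>k\<in>K. ball k \<epsilon>)"
    have "torus = sphere (0::complex) 1 \<times> sphere (0::complex) 1" by (auto simp: torus_def)
    then have "compact torus" by (metis compact_Times compact_sphere)
    then have cC: "compact C" unfolding C_def by (intro compact_diff) auto
    have CS: "C \<subseteq> S" unfolding C_def S_def using ep(1) by auto
    have inC: "u \<in> C \<longleftrightarrow> u \<in> torus \<and> (\<forall>k\<in>K. \<epsilon> \<le> dist u k)" for u
      unfolding C_def by (auto simp: dist_commute not_less)
    obtain \<eta> where eta: "\<eta> > 0" and leb: "\<And>a b. a \<in> C \<Longrightarrow> b \<in> S \<Longrightarrow> dd a b < \<eta> \<Longrightarrow> dist a b < r"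
      using lebesgue[OF ms mt cC CS ep(7)] by blast
    show "\<exists>c>0. \<forall>x\<in>S. \<forall>y\<in>S. x \<noteq> y \<longrightarrow> (\<exists>n. dd (zpow S cat_map n x) (zpow S cat_map n y) > c)"
    proof (intro exI[of _ "\<eta>/2"] conjI ballI impI)
      show "\<eta>/2 > 0" using eta by simp
      fix x y assume x: "x \<in> S" and y: "y \<in> S" and xy: "x \<noteq> y"
      show "\<exists>n. dd (zpow S cat_map n x) (zpow S cat_map n y) > \<eta>/2"
      proof (rule ccontr)
        assume "\<not> ?thesis"
        then have le: "dd (Z n x) (Z n y) \<le> \<eta>/2" for n using zS[OF x] zS[OF y] by (simp add: not_less)
        have xt: "x \<in> torus" and yt: "y \<in> torus" using x y S_def by auto
        have xS: "Z n x \<in> S" and yS: "Z n y \<in> S" for n using ZS x y S_def by auto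
        have CL: "dist (Z n x) (Z n y) < r" if "Z n x \<in> C \<or> Z n y \<in> C" for n
        proof -
          have lt: "dd (Z n x) (Z n y) < \<eta>" using le[of n] eta by simp
          have lt': "dd (Z n y) (Z n x) < \<eta>" using lt Metric_space.commute[OF ms] by metis
          show ?thesis using that leb[OF _ yS lt] leb[OF _ xS lt'] by (auto simp: dist_commute)
        qed
        define bad where "bad n \<longleftrightarrow> (\<exists>k\<in>K. \<exists>k'\<in>K. k \<noteq> k' \<and> dist (Z n x) k < \<epsilon> \<and> dist (Z n y) k' < \<epsilon>)" for n
        have nobad: "\<not> bad n" for n
        proof
          assume b0: "bad n"
          have "bad m" for m
          proof (induction m rule: int_induct[where k=n])
            case base then show ?case by (rule b0)
          next
            case (step1 i)
            then obtain k k' where kk: "k \<in> K" "k' \<in> K" "k \<noteq> k'" "dist (Z i x) k < \<epsilon>" "dist (Z i y) k' < \<epsilon>"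
              unfolding bad_def by blast
            have "\<exists>k1\<in>K. \<exists>k1'\<in>K. k1 \<noteq> k1' \<and> dist (cat_map (Z i x)) k1 < \<epsilon> \<and> dist (cat_map (Z i y)) k1' < \<epsilon>"
            proof (rule bad_step[where F = cat_map and K = K and s = s and r = r])
              show "(\<forall>k\<in>K. \<epsilon> \<le> dist (cat_map (Z i x)) k) \<or> (\<forall>k\<in>K. \<epsilon> \<le> dist (cat_map (Z i y)) k) \<Longrightarrow>
                  dist (cat_map (Z i x)) (cat_map (Z i y)) < r"
                using CL[of "i+1"] Z_up[OF xt, of i] Z_up[OF yt, of i] inC Z_torus[OF xt] Z_torus[OF yt]
                by (simp add: cat_torus)
            qed (use kk Kc cat_inj cat_lip Kt sep Z_torus[OF xt] Z_torus[OF yt] ep in auto)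
            then show ?case unfolding bad_def using Z_up[OF xt, of i] Z_up[OF yt, of i] by simp
          next
            case (step2 i)
            then obtain k k' where kk: "k \<in> K" "k' \<in> K" "k \<noteq> k'" "dist (Z i x) k < \<epsilon>" "dist (Z i y) k' < \<epsilon>"
              unfolding bad_def by blast
            have "\<exists>k1\<in>K. \<exists>k1'\<in>K. k1 \<noteq> k1' \<and> dist (cinv (Z i x)) k1 < \<epsilon> \<and> dist (cinv (Z i y)) k1' < \<epsilon>"
            proof (rule bad_step[where F = cinv and K = K and s = s and r = r])
              show "(\<forall>k\<in>K. \<epsilon> \<le> dist (cinv (Z i x)) k) \<or> (\<forall>k\<in>K. \<epsilon> \<le> dist (cinv (Z i y)) k) \<Longrightarrow>
                  dist (cinv (Z i x)) (cinv (Z i y)) < r"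
                using CL[of "i-1"] Z_down[OF xt, of i] Z_down[OF yt, of i] inC Z_torus[OF xt] Z_torus[OF yt]
                by (simp add: cinv_torus)
            qed (use kk Ki cinv_inj cinv_lip Kt sep Z_torus[OF xt] Z_torus[OF yt] ep in auto)
            then show ?case unfolding bad_def using Z_down[OF xt, of i] Z_down[OF yt, of i] by simp
          qed
          then have "\<exists>k\<in>K. dist (Z m x) k < \<epsilon>" for m unfolding bad_def by blast
          then have "x \<in> K" using isol xt by blast
          then show False using x S_def by simp
        qed
        have "dist (Z n x) (Z n y) \<le> \<delta>" for n
        proof (cases "Z n x \<in> C \<or> Z n y \<in> C")
          case True
          then show ?thesis using CL[OF True] ep(8) by simp
        next
          case False
          then obtain k k' where kk: "k \<in> K" "k' \<in> K" "dist (Z n x) k < \<epsilon>" "dist (Z n y) k' < \<epsilon>"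
            using inC Z_torus[OF xt] Z_torus[OF yt] by (auto simp: not_le)
          have "k = k'" using nobad[of n] kk unfolding bad_def by blast
          then have "dist (Z n x) (Z n y) < 2 * \<epsilon>"
            using dist_triangle[of "Z n x" "Z n y" k] kk by (simp add: dist_commute)
          then show ?thesis using ep(4) by simp
        qed
        then have "x = y" using exp xt yt by blast
        then show False using xy by simp
      qed
    qed
  qed
  show ?thesis using part1 part2 X S_def by simp
qed


end
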